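(* Let $u$ be a unit vector of the form $\frac{1}{\sqrt5^{\,\ell}}\begin{bmatrix}\alpha\\\beta\end{bmatrix}$ with $\ell\in\mathbb N$ and $\alpha,\beta\in\mathbb Z[i]$, whose least denominator exponent is $(0,\ell)$. Then there exists a Pauli+$V$ circuit $W$ of $V$-count $\ell$ such that $Wu=e_1=\begin{bmatrix}1\\0\end{bmatrix}$.
   Context: The Pauli gates are $X=\begin{bmatrix}0&1\\1&0\end{bmatrix}$, $Y=\begin{bmatrix}0&-i\\i&0\end{bmatrix}$, $Z=\begin{bmatrix}1&0\\0&-1\end{bmatrix}$; the $V$-gates are $V_X=\frac{1}{\sqrt5}\begin{bmatrix}1&2i\\2i&1\end{bmatrix}$, $V_Y=\frac{1}{\sqrt5}\begin{bmatrix}1&2\\-2&1\end{bmatrix}$, $V_Z=\frac{1}{\sqrt5}\begin{bmatrix}1+2i&0\\0&1-2i\end{bmatrix}$ and their inverses. A Pauli+$V$ circuit is a finite product of Pauli gates and $V$-gates; its $V$-count is the number of $V$-gates occurring in it. For a vector $v\in\mathbb C^2$ that can be written as $\frac{1}{\sqrt2^{\,k}\sqrt5^{\,\ell}}\begin{bmatrix}\alpha\\\beta\end{bmatrix}$ with $k,\ell\in\mathbb N$, $0\le k\le2$, $\alpha,\beta\in\mathbb Z[i]$, its least denominator exponent is the pair $(k_0,\ell_0)$ where $k_0$ (resp. $\ell_0$) is the least $k$ (resp. least $\ell$) for which such a representation exists. *)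

theory Defs
  imports "HOL-Analysis.Analysis"
begin

definition gauss_int :: "complex \<Rightarrow> bool" where
  "gauss_int z \<longleftrightarrow> Re z \<in> \<int> \<and> Im z \<in> \<int>"

definition mat2 :: "complex \<Rightarrow> complex \<Rightarrow> complex \<Rightarrow> complex \<Rightarrow> complex^2^2" where
  "mat2 a b c d = vector [vector [a, b], vector [c, d]]"

definition vec2 :: "complex \<Rightarrow> complex \<Rightarrow> complex^2" where
  "vec2 a b = vector [a, b]"

datatype gate = PauliX | PauliY | PauliZ | VX | VY | VZ | VXinv | VYinv | VZinv

definition s5 :: complex where "s5 = complex_of_real (sqrt 5)"

fun gate_mat :: "gate \<Rightarrow> complex^2^2" where
  "gate_mat PauliX = mat2 0 1 1 0"
| "gate_mat PauliY = mat2 0 (-\<i>) \<i> 0"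
| "gate_mat PauliZ = mat2 1 0 0 (-1)"
| "gate_mat VX = mat2 (1 / s5) (2*\<i> / s5) (2*\<i> / s5) (1 / s5)"
| "gate_mat VY = mat2 (1 / s5) (2 / s5) (-2 / s5) (1 / s5)"
| "gate_mat VZ = mat2 ((1 + 2*\<i>) / s5) 0 0 ((1 - 2*\<i>) / s5)"
| "gate_mat VXinv = matrix_inv (mat2 (1 / s5) (2*\<i> / s5) (2*\<i> / s5) (1 / s5))"
| "gate_mat VYinv = matrix_inv (mat2 (1 / s5) (2 / s5) (-2 / s5) (1 / s5))"
| "gate_mat VZinv = matrix_inv (mat2 ((1 + 2*\<i>) / s5) 0 0 ((1 - 2*\<i>) / s5))"

fun is_V_gate :: "gate \<Rightarrow> bool" where
  "is_V_gate PauliX = False"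
| "is_V_gate PauliY = False"
| "is_V_gate PauliZ = False"
| "is_V_gate _ = True"

definition circuit_mat :: "gate list \<Rightarrow> complex^2^2" where
  "circuit_mat gs = foldr (\<lambda>g M. gate_mat g ** M) gs (mat 1)"

definition V_count :: "gate list \<Rightarrow> nat" where
  "V_count gs = length (filter is_V_gate gs)"

definition den_repr :: "complex^2 \<Rightarrow> nat \<Rightarrow> nat \<Rightarrow> bool" where
  "den_repr v k l \<longleftrightarrow> k \<le> 2 \<and> (\<exists>\<alpha> \<beta>. gauss_int \<alpha> \<and> gauss_int \<beta> \<and>
      v = (1 / complex_of_real (sqrt 2 ^ k * sqrt 5 ^ l)) *s vec2 \<alpha> \<beta>)"

definition lde :: "complex^2 \<Rightarrow> nat \<times> nat" where
  "lde v = ((LEAST k. \<exists>l. den_repr v k l), (LEAST l. \<exists>k. den_repr v k l))"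

end

theory Submission
  imports Defs
begin

lemma mv: "mat2 p q r s *v vec2 x y = vec2 (p*x+q*y) (r*x+s*y)"
  by (simp add: vec_eq_iff forall_2 mat2_def vec2_def matrix_vector_mult_def sum_2)

lemma sv: "k *s vec2 x y = vec2 (k*x) (k*y)"
  by (simp add: vec_eq_iff forall_2 vec2_def)

lemma nv: "norm (vec2 x y) = sqrt (cmod x ^ 2 + cmod y ^ 2)"
  by (simp add: norm_vec_def L2_set_def sum_2 vec2_def)

lemma cm_Nil: "circuit_mat [] *v v = v"
  by (simp add: circuit_mat_def)

lemma cm_Cons: "circuit_mat (g # gs) *v v = gate_mat g *v (circuit_mat gs *v v)"
  by (simp add: circuit_mat_def matrix_vector_mul_assoc)

lemma cm_append: "circuit_mat (xs @ ys) *v v = circuit_mat xs *v (circuit_mat ys *v v)"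
  by (induction xs) (simp_all add: cm_Nil cm_Cons)

lemma s5_ne: "s5 \<noteq> 0" by (simp add: s5_def)
lemma s5_sq: "s5^2 = 5"
  by (simp add: s5_def flip: of_real_power)

lemma gX: "gate_mat PauliX *v vec2 x y = vec2 y x" by (simp add: mv)
lemma gY: "gate_mat PauliY *v vec2 x y = vec2 (-\<i>*y) (\<i>*x)" by (simp add: mv)
lemma gZ: "gate_mat PauliZ *v vec2 x y = vec2 x (-y)" by (simp add: mv)
lemma gVX: "gate_mat VX *v vec2 x y = vec2 ((x + 2*\<i>*y)/s5) ((2*\<i>*x+y)/s5)"
  by (simp add: mv add_divide_distrib diff_divide_distrib)
lemma gVY: "gate_mat VY *v vec2 x y = vec2 ((x + 2*y)/s5) ((-2*x+y)/s5)"
  by (simp add: mv add_divide_distrib diff_divide_distrib)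
lemma gVZ: "gate_mat VZ *v vec2 x y = vec2 ((1+2*\<i>)*x/s5) ((1-2*\<i>)*y/s5)"
  by (simp add: mv)

lemma v2eq: "vec2 a b = vec2 c d \<longleftrightarrow> a = c \<and> b = d"
  by (auto simp: vec2_def vec_eq_iff forall_2)

lemmas gates = gX gY gZ gVX gVY gVZ cm_Nil cm_Cons

lemma iI: "circuit_mat [PauliX, PauliY, PauliZ] *v vec2 x y = vec2 (\<i>*x) (\<i>*y)"
  by (simp add: gates mv)

abbreviation C :: "int \<Rightarrow> int \<Rightarrow> complex" where "C a b \<equiv> Complex (of_int a) (of_int b)"

lemma step:
  assumes G: "\<And>x y. circuit_mat G *v vec2 x y = vec2 ((p*x+q*y)/s5) ((r*x+t*y)/s5)"
    and VG: "V_count G = 1"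
    and e1: "p*C a b + q*C c d = 5 * C a' b'" and e2: "r*C a b + t*C c d = 5*C c' d'"
    and IH: "\<exists>W. V_count W = l \<and> circuit_mat W *v vec2 (C a' b' / s5^l) (C c' d' / s5^l) = vec2 1 0"
  shows "\<exists>W. V_count W = Suc l \<and> circuit_mat W *v vec2 (C a b / s5^Suc l) (C c d / s5^Suc l) = vec2 1 0"
proof -
  obtain W where W: "V_count W = l" "circuit_mat W *v vec2 (C a' b' / s5^l) (C c' d' / s5^l) = vec2 1 0"
    using IH by blast
  have h: "\<And>p q x y. (p*(x/s5^Suc l)+q*(y/s5^Suc l))/s5 = (p*x+q*y)/(s5^2 * s5^l)"
    using s5_ne by (simp add: field_simps power2_eq_square)
  have "circuit_mat G *v vec2 (C a b / s5^Suc l) (C c d / s5^Suc l) = vec2 (C a' b' / s5^l) (C c' d' / s5^l)"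
    unfolding G h e1 e2 s5_sq by simp
  then show ?thesis using W VG
    by (intro exI[of _ "W @ G"]) (simp add: cm_append V_count_def)
qed


lemma G1: "circuit_mat [VZ] *v vec2 x y = vec2 (((1+2*\<i>)*x+0*y)/s5) ((0*x+(1-2*\<i>)*y)/s5)"
  by (simp add: cm_Nil cm_Cons mv v2eq add_divide_distrib diff_divide_distrib algebra_simps)
lemma G2: "circuit_mat [PauliX,VZ,PauliX] *v vec2 x y = vec2 (((1-2*\<i>)*x+0*y)/s5) ((0*x+(1+2*\<i>)*y)/s5)"
  by (simp add: cm_Nil cm_Cons mv v2eq add_divide_distrib diff_divide_distrib algebra_simps)
lemma G3: "circuit_mat [VX] *v vec2 x y = vec2 ((1*x+(2*\<i>)*y)/s5) (((2*\<i>)*x+1*y)/s5)"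
  by (simp add: cm_Nil cm_Cons mv v2eq add_divide_distrib diff_divide_distrib algebra_simps)
lemma G4: "circuit_mat [PauliZ,VX,PauliZ] *v vec2 x y = vec2 ((1*x+(-2*\<i>)*y)/s5) (((-2*\<i>)*x+1*y)/s5)"
  by (simp add: cm_Nil cm_Cons mv v2eq add_divide_distrib diff_divide_distrib algebra_simps)
lemma G5: "circuit_mat [VY] *v vec2 x y = vec2 ((1*x+2*y)/s5) (((-2)*x+1*y)/s5)"
  by (simp add: cm_Nil cm_Cons mv v2eq add_divide_distrib diff_divide_distrib algebra_simps)
lemma G6: "circuit_mat [PauliZ,VY,PauliZ] *v vec2 x y = vec2 ((1*x+(-2)*y)/s5) ((2*x+1*y)/s5)"
  by (simp add: cm_Nil cm_Cons mv v2eq add_divide_distrib diff_divide_distrib algebra_simps)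

lemma ri: "x = y \<Longrightarrow> real_of_int x = real_of_int y" by simp
lemma dv: "(x::int) mod 5 = 0 \<Longrightarrow> x = 5 * (x div 5)" by (metis add.right_neutral div_mult_mod_eq mult.commute)

lemma fin_case:
  assumes G: "\<And>x y. circuit_mat G *v vec2 x y = vec2 ((p*x+q*y)/s5) ((r*x+t*y)/s5)"
    and VG: "V_count G = 1"
    and e1: "p*C a b + q*C c d = 5 * C a' b'" and e2: "r*C a b + t*C c d = 5*C c' d'"
    and sq: "25*(a'^2+b'^2+c'^2+d'^2) = 5*(a^2+b^2+c^2+d^2)"
    and pr: "a^2+b^2+c^2+d^2 = 5^Suc l"
    and IH: "\<And>a b c d. a^2+b^2+c^2+d^2 = (5::int)^l \<Longrightarrow>
       \<exists>W. V_count W = l \<and> circuit_mat W *v vec2 (C a b / s5^l) (C c d / s5^l) = vec2 1 0"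
  shows "\<exists>W. V_count W = Suc l \<and> circuit_mat W *v vec2 (C a b / s5^Suc l) (C c d / s5^Suc l) = vec2 1 0"
proof -
  have "a'^2+b'^2+c'^2+d'^2 = 5^l" using sq pr by simp
  from IH[OF this] show ?thesis by (rule step[OF G VG e1 e2])
qed


lemma sq0: "(a::int) = r + 5*q \<Longrightarrow> a^2 = r^2 + 5*(2*r*q+5*q^2)"
  by (simp add: power2_eq_square algebra_simps)
lemma sqm: "(a::int)^2 = (a mod 5)^2 + 5*(2*(a mod 5)*(a div 5) + 5*(a div 5)^2)"
  by (rule sq0) simp
lemma dvdsq: "5 dvd ((a::int)^2+b^2+c^2+d^2) \<longleftrightarrow> 5 dvd ((a mod 5)^2+(b mod 5)^2+(c mod 5)^2+(d mod 5)^2)"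
proof -
  have "(a::int)^2+b^2+c^2+d^2 = ((a mod 5)^2+(b mod 5)^2+(c mod 5)^2+(d mod 5)^2) + 5*((2*(a mod 5)*(a div 5) + 5*(a div 5)^2) + (2*(b mod 5)*(b div 5) + 5*(b div 5)^2)+(2*(c mod 5)*(c div 5) + 5*(c div 5)^2)+(2*(d mod 5)*(d div 5) + 5*(d div 5)^2))"
    by (subst sqm[of a], subst sqm[of b], subst sqm[of c], subst sqm[of d]) (simp add: algebra_simps)
  then show ?thesis by (metis dvd_add_left_iff dvd_triv_left)
qed
lemma r5: "(a::int) mod 5 \<in> {0,1,2,3,4}"
proof -
  have "0 \<le> a mod 5" "a mod 5 < 5" by auto
  then show ?thesis by auto
qed


lemma fin: "\<forall>x\<in>{0,1,2,3,4::int}. \<forall>y\<in>{0,1,2,3,4}. \<forall>z\<in>{0,1,2,3,4}. \<forall>w\<in>{0,1,2,3,4}. 5 dvd (x^2+y^2+z^2+w^2) \<longrightarrow>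
  (5 dvd (x - 2*y) \<and> 5 dvd (z + 2*w)) \<or>
  (5 dvd (x + 2*y) \<and> 5 dvd (z - 2*w)) \<or>
  (5 dvd (x - 2*w) \<and> 5 dvd (z - 2*y)) \<or>
  (5 dvd (x + 2*w) \<and> 5 dvd (z + 2*y)) \<or>
  (5 dvd (x + 2*z) \<and> 5 dvd (y + 2*w)) \<or>
  (5 dvd (x - 2*z) \<and> 5 dvd (y - 2*w))"
  by simp

lemma tm: "5 dvd ((x::int) - 2*y) \<longleftrightarrow> 5 dvd (x mod 5 - 2*(y mod 5))" by presburger
lemma tp: "5 dvd ((x::int) + 2*y) \<longleftrightarrow> 5 dvd (x mod 5 + 2*(y mod 5))" by presburger

lemma key:
  fixes a b c d :: int
  assumes "5 dvd (a^2+b^2+c^2+d^2)"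
  shows "(5 dvd (a - 2*b) \<and> 5 dvd (c + 2*d)) \<or>
  (5 dvd (a + 2*b) \<and> 5 dvd (c - 2*d)) \<or>
  (5 dvd (a - 2*d) \<and> 5 dvd (c - 2*b)) \<or>
  (5 dvd (a + 2*d) \<and> 5 dvd (c + 2*b)) \<or>
  (5 dvd (a + 2*c) \<and> 5 dvd (b + 2*d)) \<or>
  (5 dvd (a - 2*c) \<and> 5 dvd (b - 2*d))"
proof -
  have F: "5 dvd ((a mod 5)^2+(b mod 5)^2+(c mod 5)^2+(d mod 5)^2) \<longrightarrow>
  (5 dvd (a mod 5 - 2*(b mod 5)) \<and> 5 dvd (c mod 5 + 2*(d mod 5))) \<or>
  (5 dvd (a mod 5 + 2*(b mod 5)) \<and> 5 dvd (c mod 5 - 2*(d mod 5))) \<or>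
  (5 dvd (a mod 5 - 2*(d mod 5)) \<and> 5 dvd (c mod 5 - 2*(b mod 5))) \<or>
  (5 dvd (a mod 5 + 2*(d mod 5)) \<and> 5 dvd (c mod 5 + 2*(b mod 5))) \<or>
  (5 dvd (a mod 5 + 2*(c mod 5)) \<and> 5 dvd (b mod 5 + 2*(d mod 5))) \<or>
  (5 dvd (a mod 5 - 2*(c mod 5)) \<and> 5 dvd (b mod 5 - 2*(d mod 5)))"
    by (rule impI, rule fin[rule_format, OF r5[of a] r5[of b] r5[of c] r5[of d]])
  from F[unfolded tm[symmetric] tp[symmetric] dvdsq[symmetric]] assms show ?thesis by (rule mp)
qed

lemma base:
  fixes a b c d :: int
  assumes "a^2+b^2+c^2+d^2 = 1"
  shows "\<exists>W. V_count W = 0 \<and> circuit_mat W *v vec2 (C a b) (C c d) = vec2 1 0"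
proof -
  have sq: "a^2 \<le> 1" "b^2 \<le> 1" "c^2 \<le> 1" "d^2 \<le> 1"
    using assms by (smt (verit) zero_le_power2)+
  have "\<bar>a\<bar> \<le> \<bar>1\<bar>" "\<bar>b\<bar> \<le> \<bar>1\<bar>" "\<bar>c\<bar> \<le> \<bar>1\<bar>" "\<bar>d\<bar> \<le> \<bar>1\<bar>"
    using sq by (simp_all only: abs_le_square_iff power_one)
  then have m: "a \<in> {-1,0,1}" "b \<in> {-1,0,1}" "c \<in> {-1,0,1}" "d \<in> {-1,0,1}" by auto
  have "(a=1\<and>b=0\<and>c=0\<and>d=0) \<or> (a=-1\<and>b=0\<and>c=0\<and>d=0) \<or> (a=0\<and>b=1\<and>c=0\<and>d=0) \<or> (a=0\<and>b=-1\<and>c=0\<and>d=0) \<or>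
        (a=0\<and>b=0\<and>c=1\<and>d=0) \<or> (a=0\<and>b=0\<and>c=-1\<and>d=0) \<or> (a=0\<and>b=0\<and>c=0\<and>d=1) \<or> (a=0\<and>b=0\<and>c=0\<and>d=-1)"
    using m assms by (elim insertE emptyE) simp_all
  then show ?thesis
    apply (elim disjE conjE)
    subgoal by (rule exI[of _ "[]"]) (simp add: cm_Nil V_count_def v2eq complex_eq_iff)
    subgoal by (rule exI[of _ "[PauliX,PauliY,PauliZ,PauliX,PauliY,PauliZ]"]) (simp add: cm_Nil cm_Cons mv V_count_def v2eq complex_eq_iff)
    subgoal by (rule exI[of _ "[PauliX,PauliY,PauliZ,PauliX,PauliY,PauliZ,PauliX,PauliY,PauliZ]"]) (simp add: cm_Nil cm_Cons mv V_count_def v2eq complex_eq_iff)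
    subgoal by (rule exI[of _ "[PauliX,PauliY,PauliZ]"]) (simp add: cm_Nil cm_Cons mv V_count_def v2eq complex_eq_iff)
    subgoal by (rule exI[of _ "[PauliX]"]) (simp add: cm_Nil cm_Cons mv V_count_def v2eq complex_eq_iff)
    subgoal by (rule exI[of _ "[PauliX,PauliY,PauliZ,PauliX,PauliY,PauliZ,PauliX]"]) (simp add: cm_Nil cm_Cons mv V_count_def v2eq complex_eq_iff)
    subgoal by (rule exI[of _ "[PauliX,PauliY,PauliZ,PauliX,PauliY,PauliZ,PauliX,PauliY,PauliZ,PauliX]"]) (simp add: cm_Nil cm_Cons mv V_count_def v2eq complex_eq_iff)
    subgoal by (rule exI[of _ "[PauliX,PauliY,PauliZ,PauliX]"]) (simp add: cm_Nil cm_Cons mv V_count_def v2eq complex_eq_iff)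
    done
qed


lemma mainl: "a^2+b^2+c^2+d^2 = (5::int)^l \<Longrightarrow>
  \<exists>W. V_count W = l \<and> circuit_mat W *v vec2 (C a b / s5^l) (C c d / s5^l) = vec2 1 0"
proof (induction l arbitrary: a b c d)
  case 0 then show ?case using base[of a b c d] by simp
next
  case (Suc l)
  have "5 dvd (a^2+b^2+c^2+d^2)" using Suc.prems by simp
  from key[OF this] show ?case
  proof (elim disjE conjE)
    assume h1: "5 dvd (a - 2*b)" and h2: "5 dvd (c + 2*d)"
    obtain A where hA: "a - 2*b = 5*A" using h1 by (auto elim!: dvdE)
    obtain B where hB: "c + 2*d = 5*B" using h2 by (auto elim!: dvdE)
    have s1: "a = 5*A + 2*b" and s2: "c = 5*B - 2*d" using hA hB by linarith+
    show ?thesis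
      apply (rule fin_case[OF G1 _ _ _ _ Suc.prems _, of "A" "2*A+b" "B" "d - 2*B"])
      subgoal by (simp add: V_count_def)
      subgoal using s1 s2 by (simp add: complex_eq_iff)
      subgoal using s1 s2 by (simp add: complex_eq_iff)
      subgoal unfolding s1 s2 by (simp add: power2_eq_square algebra_simps)
      subgoal by (rule Suc.IH)
      done
  next
    assume h1: "5 dvd (a + 2*b)" and h2: "5 dvd (c - 2*d)"
    obtain A where hA: "a + 2*b = 5*A" using h1 by (auto elim!: dvdE)
    obtain B where hB: "c - 2*d = 5*B" using h2 by (auto elim!: dvdE)
    have s1: "a = 5*A - 2*b" and s2: "c = 5*B + 2*d" using hA hB by linarith+
    show ?thesis
      apply (rule fin_case[OF G2 _ _ _ _ Suc.prems _, of "A" "b - 2*A" "B" "2*B+d"])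
      subgoal by (simp add: V_count_def)
      subgoal using s1 s2 by (simp add: complex_eq_iff)
      subgoal using s1 s2 by (simp add: complex_eq_iff)
      subgoal unfolding s1 s2 by (simp add: power2_eq_square algebra_simps)
      subgoal by (rule Suc.IH)
      done
  next
    assume h1: "5 dvd (a - 2*d)" and h2: "5 dvd (c - 2*b)"
    obtain A where hA: "a - 2*d = 5*A" using h1 by (auto elim!: dvdE)
    obtain B where hB: "c - 2*b = 5*B" using h2 by (auto elim!: dvdE)
    have s1: "a = 5*A + 2*d" and s2: "c = 5*B + 2*b" using hA hB by linarith+
    show ?thesis
      apply (rule fin_case[OF G3 _ _ _ _ Suc.prems _, of "A" "b+2*B" "B" "d+2*A"])
      subgoal by (simp add: V_count_def)
      subgoal using s1 s2 by (simp add: complex_eq_iff)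
      subgoal using s1 s2 by (simp add: complex_eq_iff)
      subgoal unfolding s1 s2 by (simp add: power2_eq_square algebra_simps)
      subgoal by (rule Suc.IH)
      done
  next
    assume h1: "5 dvd (a + 2*d)" and h2: "5 dvd (c + 2*b)"
    obtain A where hA: "a + 2*d = 5*A" using h1 by (auto elim!: dvdE)
    obtain B where hB: "c + 2*b = 5*B" using h2 by (auto elim!: dvdE)
    have s1: "a = 5*A - 2*d" and s2: "c = 5*B - 2*b" using hA hB by linarith+
    show ?thesis
      apply (rule fin_case[OF G4 _ _ _ _ Suc.prems _, of "A" "b-2*B" "B" "d-2*A"])
      subgoal by (simp add: V_count_def)
      subgoal using s1 s2 by (simp add: complex_eq_iff)
      subgoal using s1 s2 by (simp add: complex_eq_iff)
      subgoal unfolding s1 s2 by (simp add: power2_eq_square algebra_simps)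
      subgoal by (rule Suc.IH)
      done
  next
    assume h1: "5 dvd (a + 2*c)" and h2: "5 dvd (b + 2*d)"
    obtain A where hA: "a + 2*c = 5*A" using h1 by (auto elim!: dvdE)
    obtain B where hB: "b + 2*d = 5*B" using h2 by (auto elim!: dvdE)
    have s1: "a = 5*A - 2*c" and s2: "b = 5*B - 2*d" using hA hB by linarith+
    show ?thesis
      apply (rule fin_case[OF G5 _ _ _ _ Suc.prems _, of "A" "B" "c-2*A" "d-2*B"])
      subgoal by (simp add: V_count_def)
      subgoal using s1 s2 by (simp add: complex_eq_iff)
      subgoal using s1 s2 by (simp add: complex_eq_iff)
      subgoal unfolding s1 s2 by (simp add: power2_eq_square algebra_simps)
      subgoal by (rule Suc.IH)
      done
  next
    assume h1: "5 dvd (a - 2*c)" and h2: "5 dvd (b - 2*d)"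
    obtain A where hA: "a - 2*c = 5*A" using h1 by (auto elim!: dvdE)
    obtain B where hB: "b - 2*d = 5*B" using h2 by (auto elim!: dvdE)
    have s1: "a = 5*A + 2*c" and s2: "b = 5*B + 2*d" using hA hB by linarith+
    show ?thesis
      apply (rule fin_case[OF G6 _ _ _ _ Suc.prems _, of "A" "B" "2*A+c" "2*B+d"])
      subgoal by (simp add: V_count_def)
      subgoal using s1 s2 by (simp add: complex_eq_iff)
      subgoal using s1 s2 by (simp add: complex_eq_iff)
      subgoal unfolding s1 s2 by (simp add: power2_eq_square algebra_simps)
      subgoal by (rule Suc.IH)
      done
  qed
qed


theorem lemma6p10:
  fixes u :: "complex^2" and l :: nat and \<alpha> \<beta> :: complex
  assumes "norm u = 1"
    and "gauss_int \<alpha>" and "gauss_int \<beta>"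
    and "u = (1 / complex_of_real (sqrt 5 ^ l)) *s vec2 \<alpha> \<beta>"
    and "lde u = (0, l)"
  shows "\<exists>W. V_count W = l \<and> circuit_mat W *v u = vec2 1 0"
proof -
  obtain a where a: "Re \<alpha> = of_int a" using assms(2) unfolding gauss_int_def by (auto elim: Ints_cases)
  obtain b where b: "Im \<alpha> = of_int b" using assms(2) unfolding gauss_int_def by (auto elim: Ints_cases)
  obtain c where c: "Re \<beta> = of_int c" using assms(3) unfolding gauss_int_def by (auto elim: Ints_cases)
  obtain d where d: "Im \<beta> = of_int d" using assms(3) unfolding gauss_int_def by (auto elim: Ints_cases)
  have al: "\<alpha> = C a b" using a b by (simp add: complex_eq_iff)
  have be: "\<beta> = C c d" using c d by (simp add: complex_eq_iff)
  have cs: "complex_of_real (sqrt 5 ^ l) = s5^l" by (simp add: s5_def of_real_power)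
  have u: "u = vec2 (C a b / s5^l) (C c d / s5^l)"
    using assms(4) unfolding cs al be sv by simp
  have ns: "norm (s5^l) = sqrt 5 ^ l" by (simp add: s5_def norm_power)
  have "1 = sqrt ((cmod (C a b) / sqrt 5 ^ l)^2 + (cmod (C c d) / sqrt 5 ^ l)^2)"
    using assms(1) unfolding u nv by (simp add: norm_divide ns)
  hence h: "(cmod (C a b) / sqrt 5 ^ l)^2 + (cmod (C c d) / sqrt 5 ^ l)^2 = 1"
    by (metis real_sqrt_eq_1_iff)
  have p5': "(sqrt 5 ^ l)^2 = (sqrt 5 ^ 2::real)^l"
    by (metis power_mult mult.commute)
  have p5: "(sqrt 5 ^ l)^2 = (5::real)^l" unfolding p5' by simp
  have "(real_of_int a^2 + real_of_int b^2) / 5^l + (real_of_int c^2 + real_of_int d^2) / 5^l = 1"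
    using h by (simp add: power_divide cmod_power2 p5)
  hence hh: "(real_of_int a^2 + real_of_int b^2) / 5^l + (real_of_int c^2 + real_of_int d^2) / 5^l = 1" .
  have "real_of_int a^2 + real_of_int b^2 + real_of_int c^2 + real_of_int d^2
     = ((real_of_int a^2 + real_of_int b^2) / 5^l + (real_of_int c^2 + real_of_int d^2) / 5^l) * 5^l"
    by (simp add: field_simps)
  hence "real_of_int a^2 + real_of_int b^2 + real_of_int c^2 + real_of_int d^2 = 5^l"
    unfolding hh by simp
  hence "real_of_int (a^2+b^2+c^2+d^2) = real_of_int (5^l)" by simp
  hence "a^2+b^2+c^2+d^2 = 5^l" by (simp only: of_int_eq_iff)
  from mainl[OF this] show ?thesis unfolding u .
qed

end
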